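(* Let $F$ be an unsatisfiable CNF formula not containing the variables $x$ and $y$, and let $f^x_y(F) = \{x,\ \neg x \vee y\} \cup \{\neg y \vee \delta \mid \delta \in F\}$. Then every minimum-size regular resolution proof of $f^x_y(F)$ contains exactly one resolution step on $x$, and this step can be pushed to the leaf level, i.e., the proof can be transformed, without changing its size, into a regular resolution proof of $f^x_y(F)$ in which the resolution on $x$ is the resolution of the two leaf clauses $x$ and $\neg x \vee y$.
   Context: The resolution rule derives from clauses $\alpha \vee z$ and $\beta \vee \neg z$ the resolvent $\alpha \vee \beta$ (resolving on $z$). A resolution proof of a CNF formula $F$ is a directed acyclic graph whose nodes are clauses, whose leaves are clauses of $F$, in which each internal node is the resolvent of its two parents, and whose root is the empty clause. It is regular if no path from the root to a leaf contains two resolution steps on the same variable. The size of a proof is its number of clauses (nodes); an optimal proof is one of minimum size. *)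

theory Defs
  imports Main
begin

datatype 'v lit = Pos 'v | Neg 'v

type_synonym 'v clause = "'v lit set"

definition cnf :: "'v clause set \<Rightarrow> bool" where
  "cnf F \<longleftrightarrow> finite F \<and> (\<forall>C\<in>F. finite C)"

fun lit_sat :: "('v \<Rightarrow> bool) \<Rightarrow> 'v lit \<Rightarrow> bool" where
  "lit_sat \<sigma> (Pos v) = \<sigma> v"
| "lit_sat \<sigma> (Neg v) = (\<not> \<sigma> v)"

definition satisfiable :: "'v clause set \<Rightarrow> bool" where
  "satisfiable F \<longleftrightarrow> (\<exists>\<sigma>. \<forall>C\<in>F. \<exists>l\<in>C. lit_sat \<sigma> l)"

definition occurs :: "'v \<Rightarrow> 'v clause set \<Rightarrow> bool" where
  "occurs v F \<longleftrightarrow> (\<exists>C\<in>F. Pos v \<in> C \<or> Neg v \<in> C)"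

definition resolvent :: "'v clause \<Rightarrow> 'v clause \<Rightarrow> 'v \<Rightarrow> 'v clause \<Rightarrow> bool" where
  "resolvent C1 C2 z R \<longleftrightarrow> Pos z \<in> C1 \<and> Neg z \<in> C2 \<and>
     R = (C1 - {Pos z}) \<union> (C2 - {Neg z})"

text \<open>A node is a leaf (\<open>inf n = None\<close>) or an internal node
  (\<open>inf n = Some (a, b, z)\<close>): the resolvent of its parents \<open>a\<close>
  (containing \<open>z\<close>) and \<open>b\<close> (containing \<open>\<not>z\<close>) on the variable \<open>z\<close>.\<close>
record 'v rproof =
  nodes :: "nat set"
  lab :: "nat \<Rightarrow> 'v clause"
  inf :: "nat \<Rightarrow> (nat \<times> nat \<times> 'v) option"
  root :: nat

definition edges :: "'v rproof \<Rightarrow> (nat \<times> nat) set" where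
  "edges P = {(a, n). n \<in> nodes P \<and>
      (\<exists>b z. inf P n = Some (a, b, z) \<or> inf P n = Some (b, a, z))}"

definition pivot :: "'v rproof \<Rightarrow> nat \<Rightarrow> 'v option" where
  "pivot P n = (case inf P n of None \<Rightarrow> None | Some (a, b, z) \<Rightarrow> Some z)"

definition res_proof :: "'v clause set \<Rightarrow> 'v rproof \<Rightarrow> bool" where
  "res_proof F P \<longleftrightarrow>
     finite (nodes P) \<and> root P \<in> nodes P \<and> lab P (root P) = {} \<and>
     acyclic (edges P) \<and>
     (\<forall>n\<in>nodes P. (n, root P) \<in> (edges P)\<^sup>*) \<and>
     (\<forall>n\<in>nodes P. case inf P n of
         None \<Rightarrow> lab P n \<in> F
       | Some (a, b, z) \<Rightarrow> a \<in> nodes P \<and> b \<in> nodes P \<and>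
                          resolvent (lab P a) (lab P b) z (lab P n))"

definition regular :: "'v rproof \<Rightarrow> bool" where
  "regular P \<longleftrightarrow> (\<forall>m n z. (m, n) \<in> (edges P)\<^sup>+ \<longrightarrow>
       pivot P m = Some z \<longrightarrow> pivot P n \<noteq> Some z)"

definition reg_proof :: "'v clause set \<Rightarrow> 'v rproof \<Rightarrow> bool" where
  "reg_proof F P \<longleftrightarrow> res_proof F P \<and> regular P"

definition psize :: "'v rproof \<Rightarrow> nat" where
  "psize P = card (nodes P)"

definition min_reg_proof :: "'v clause set \<Rightarrow> 'v rproof \<Rightarrow> bool" where
  "min_reg_proof F P \<longleftrightarrow> reg_proof F P \<and> (\<forall>Q. reg_proof F Q \<longrightarrow> psize P \<le> psize Q)"

definition fxy :: "'v \<Rightarrow> 'v \<Rightarrow> 'v clause set \<Rightarrow> 'v clause set" where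
  "fxy x y F = {{Pos x}, {Neg x, Pos y}} \<union> {insert (Neg y) \<delta> | \<delta>. \<delta> \<in> F}"

end

theory Submission
  imports Defs
begin


locale L8 =
  fixes F :: "'v clause set" and x y :: 'v and P :: "'v rproof"
  assumes xy: "x \<noteq> y" and nox: "\<not> occurs x F" and rp: "res_proof (fxy x y F) P"
begin

definition X where "X = {n \<in> nodes P. \<exists>a b. inf P n = Some (a, b, x)}"
definition A where "A = {n \<in> nodes P. inf P n = None \<and> lab P n = {Pos x}}"
definition B where "B = {n \<in> nodes P. inf P n = None \<and> lab P n = {Neg x, Pos y}}"
definition Om where "Om = nodes P - X - A - B"

lemma finN: "finite (nodes P)" using rp by (simp add: res_proof_def)
lemma rootN: "root P \<in> nodes P" using rp by (simp add: res_proof_def)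
lemma rootL: "lab P (root P) = {}" using rp by (simp add: res_proof_def)
lemma acycP: "acyclic (edges P)" using rp by (simp add: res_proof_def)
lemma reachP: "n \<in> nodes P \<Longrightarrow> (n, root P) \<in> (edges P)\<^sup>*" using rp by (simp add: res_proof_def)

lemma fin_edges: "finite (edges P)"
proof -
  have "edges P \<subseteq> (\<Union>n\<in>nodes P. {(fst (the (inf P n)), n), (fst (snd (the (inf P n))), n)})"
    unfolding edges_def by auto
  moreover have "finite (\<Union>n\<in>nodes P. {(fst (the (inf P n)), n), (fst (snd (the (inf P n))), n)})"
    using finN by auto
  ultimately show ?thesis by (rule finite_subset)
qed

lemma wfE: "wf (edges P)" using finite_acyclic_wf fin_edges acycP by blast

lemma leafL: assumes "n \<in> nodes P" "inf P n = None" shows "lab P n \<in> fxy x y F"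
proof -
  have "case inf P n of None \<Rightarrow> lab P n \<in> fxy x y F
       | Some (a, b, z) \<Rightarrow> a \<in> nodes P \<and> b \<in> nodes P \<and> resolvent (lab P a) (lab P b) z (lab P n)"
    using rp assms(1) unfolding res_proof_def by blast
  then show ?thesis using assms(2) by simp
qed

lemma innerL: assumes "n \<in> nodes P" "inf P n = Some (a, b, z)"
  shows "a \<in> nodes P" "b \<in> nodes P" "Pos z \<in> lab P a" "Neg z \<in> lab P b"
    "lab P n = (lab P a - {Pos z}) \<union> (lab P b - {Neg z})"
proof -
  have "case inf P n of None \<Rightarrow> lab P n \<in> fxy x y F
       | Some (a, b, z) \<Rightarrow> a \<in> nodes P \<and> b \<in> nodes P \<and> resolvent (lab P a) (lab P b) z (lab P n)"
    using rp assms(1) unfolding res_proof_def by blast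
  then have "a \<in> nodes P \<and> b \<in> nodes P \<and> resolvent (lab P a) (lab P b) z (lab P n)"
    using assms(2) by simp
  then show "a \<in> nodes P" "b \<in> nodes P" "Pos z \<in> lab P a" "Neg z \<in> lab P b"
    "lab P n = (lab P a - {Pos z}) \<union> (lab P b - {Neg z})" unfolding resolvent_def by auto
qed

lemma edgeI: assumes "n \<in> nodes P" "inf P n = Some (a, b, z)"
  shows "(a, n) \<in> edges P" "(b, n) \<in> edges P"
  using assms unfolding edges_def by auto

lemma edgeD: assumes "(u, n) \<in> edges P"
  shows "n \<in> nodes P" "\<exists>a b z. inf P n = Some (a, b, z) \<and> (u = a \<or> u = b)"
  using assms unfolding edges_def by auto

lemma fxy_cases: "C \<in> fxy x y F \<Longrightarrow>
   C = {Pos x} \<or> C = {Neg x, Pos y} \<or> (Neg y \<in> C \<and> Pos x \<notin> C \<and> Neg x \<notin> C)"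
  using nox xy unfolding fxy_def occurs_def by auto

lemma L1: "n \<in> nodes P \<Longrightarrow> Pos x \<in> lab P n \<Longrightarrow> inf P n = None \<and> lab P n = {Pos x}"
proof (induction n rule: wf_induct_rule[OF wfE, case_names less])
  case (less n)
  show ?case
  proof (cases "inf P n")
    case None
    then have "lab P n \<in> fxy x y F" using leafL less.prems by auto
    with fxy_cases None less.prems xy show ?thesis by auto
  next
    case (Some tr)
    then obtain a b z where s: "inf P n = Some (a, b, z)" by (cases tr) auto
    note i = innerL[OF less.prems(1) s]
    note e = edgeI[OF less.prems(1) s]
    have "Pos x \<in> lab P a - {Pos z} \<or> Pos x \<in> lab P b - {Neg z}" using i(5) less.prems by auto
    then show ?thesis
    proof
      assume h: "Pos x \<in> lab P a - {Pos z}"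
      then have "lab P a = {Pos x}" using less.IH[OF e(1) i(1)] by auto
      then show ?thesis using h i(3) by auto
    next
      assume h: "Pos x \<in> lab P b - {Neg z}"
      then have "lab P b = {Pos x}" using less.IH[OF e(2) i(2)] by auto
      then show ?thesis using i(4) by auto
    qed
  qed
qed

lemma LNeg: "n \<in> nodes P \<Longrightarrow> Neg x \<in> lab P n \<Longrightarrow> B \<noteq> {}"
proof (induction n rule: wf_induct_rule[OF wfE, case_names less])
  case (less n)
  show ?case
  proof (cases "inf P n")
    case None
    then have "lab P n \<in> fxy x y F" using leafL less.prems by auto
    with fxy_cases None less.prems have "lab P n = {Neg x, Pos y}" by auto
    then have "n \<in> B" using None less.prems unfolding B_def by auto
    then show ?thesis by auto
  next
    case (Some tr)
    then obtain a b z where s: "inf P n = Some (a, b, z)" by (cases tr) auto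
    note i = innerL[OF less.prems(1) s]
    note e = edgeI[OF less.prems(1) s]
    have "Neg x \<in> lab P a \<or> Neg x \<in> lab P b" using i(5) less.prems by auto
    then show ?thesis using less.IH[OF e(1) i(1)] less.IH[OF e(2) i(2)] by auto
  qed
qed

lemma Xlab: assumes "n \<in> nodes P" "inf P n = Some (a, b, x)"
  shows "a \<in> A" "b \<in> nodes P" "Neg x \<in> lab P b" "lab P n = lab P b - {Neg x}"
proof -
  note i = innerL[OF assms]
  have la: "lab P a = {Pos x}" "inf P a = None" using L1[OF i(1) i(3)] by auto
  then show "a \<in> A" using i(1) unfolding A_def by auto
  show "b \<in> nodes P" "Neg x \<in> lab P b" using i by auto
  show "lab P n = lab P b - {Neg x}" using i(5) la by auto
qed

lemma Xprops: assumes "n \<in> nodes P" "inf P n = Some (a, b, x)"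
  shows "b \<notin> A" "b \<notin> X" "Neg x \<notin> lab P n"
proof -
  note xl = Xlab[OF assms]
  show "Neg x \<notin> lab P n" using xl(4) by auto
  show "b \<notin> A" using xl(3) unfolding A_def by auto
  show "b \<notin> X"
  proof
    assume "b \<in> X"
    then obtain a' b' where "inf P b = Some (a', b', x)" unfolding X_def by auto
    then show False using Xlab[OF xl(2)] xl(3) by auto
  qed
qed

lemma nonX: assumes "n \<in> nodes P" "inf P n = Some (p1, p2, z)" "z \<noteq> x"
  shows "p1 \<notin> A" "p2 \<notin> A"
  using innerL[OF assms(1,2)] assms(3) unfolding A_def by auto

lemma Xne: "X \<noteq> {}"
proof
  assume X0: "X = {}"
  have "n \<in> nodes P \<Longrightarrow> n \<notin> A \<Longrightarrow> \<exists>v. Neg v \<in> lab P n" for n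
  proof (induction n rule: wf_induct_rule[OF wfE, case_names less])
    case (less n)
    show ?case
    proof (cases "inf P n")
      case None
      then have "lab P n \<in> fxy x y F" using leafL less.prems by auto
      with fxy_cases None less.prems show ?thesis unfolding A_def by blast
    next
      case (Some tr)
      then obtain a b z where s: "inf P n = Some (a, b, z)" by (cases tr) auto
      have zx: "z \<noteq> x" using s X0 less.prems unfolding X_def by auto
      note i = innerL[OF less.prems(1) s]
      note e = edgeI[OF less.prems(1) s]
      obtain v where "Neg v \<in> lab P a" using less.IH[OF e(1) i(1) nonX(1)[OF less.prems(1) s zx]] by auto
      then show ?thesis using i(5) by auto
    qed
  qed
  moreover have "root P \<notin> A" using rootL unfolding A_def by auto
  ultimately show False using rootN rootL by auto
qed

end


locale L8b = L8 F x y P for F :: "'v clause set" and x y :: 'v and P :: "'v rproof" +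
  fixes t a0 b0 :: nat
  assumes regP: "regular P" and tX: "t \<in> X" and a0A: "a0 \<in> A" and b0B: "b0 \<in> B"
begin

definition sp where "sp n = fst (snd (the (inf P n)))"
definition psi where "psi p = (if p \<in> B then t else p)"
definition phi where "phi p = psi (if p \<in> X then sp p else p)"
definition Q :: "'v rproof" where "Q = \<lparr>nodes = Om \<union> {a0, b0, t},
   lab = (\<lambda>n. if n = t then {Pos y} else if n = b0 then {Neg x, Pos y} else lab P n - {Neg x}),
   inf = (\<lambda>n. if n = t then Some (a0, b0, x) else if n \<in> Om then
             map_option (\<lambda>(p1, p2, z). (phi p1, phi p2, z)) (inf P n) else None),
   root = phi (root P)\<rparr>"

lemma Qsimps: "nodes Q = Om \<union> {a0, b0, t}"
  "lab Q n = (if n = t then {Pos y} else if n = b0 then {Neg x, Pos y} else lab P n - {Neg x})"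
  "inf Q n = (if n = t then Some (a0, b0, x) else if n \<in> Om then
             map_option (\<lambda>(p1, p2, z). (phi p1, phi p2, z)) (inf P n) else None)"
  "root Q = phi (root P)"
  unfolding Q_def by simp_all

lemma tP: "t \<in> nodes P" "\<exists>a b. inf P t = Some (a, b, x)" using tX unfolding X_def by auto
lemma a0P: "a0 \<in> nodes P" "inf P a0 = None" "lab P a0 = {Pos x}" using a0A unfolding A_def by auto
lemma b0P: "b0 \<in> nodes P" "inf P b0 = None" "lab P b0 = {Neg x, Pos y}" using b0B unfolding B_def by auto

lemma facts: "t \<in> nodes P" "t \<notin> A" "t \<notin> B" "t \<notin> Om" "a0 \<notin> X" "a0 \<notin> B" "a0 \<notin> Om"
  "b0 \<notin> X" "b0 \<notin> A" "b0 \<notin> Om" "a0 \<noteq> b0" "a0 \<noteq> t" "b0 \<noteq> t" "a0 \<in> nodes P" "b0 \<in> nodes P"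
  "lab P a0 = {Pos x}" "lab P b0 = {Neg x, Pos y}" "inf P a0 = None" "inf P b0 = None"
proof -
  show "t \<in> nodes P" "a0 \<in> nodes P" "b0 \<in> nodes P"
  "lab P a0 = {Pos x}" "lab P b0 = {Neg x, Pos y}" "inf P a0 = None" "inf P b0 = None"
    using tP a0P b0P by auto
  show "t \<notin> A" "t \<notin> B" using tP(2) unfolding A_def B_def by auto
  show "t \<notin> Om" using tX unfolding Om_def by simp
  show "a0 \<notin> X" using a0P(2) unfolding X_def by simp
  show "a0 \<notin> B" using a0P(3) unfolding B_def by simp
  show "a0 \<notin> Om" using a0A unfolding Om_def by simp
  show "b0 \<notin> X" using b0P(2) unfolding X_def by simp
  show "b0 \<notin> A" using b0P(3) unfolding A_def by simp
  show "b0 \<notin> Om" using b0B unfolding Om_def by simp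
  show "a0 \<noteq> b0" using a0P(3) b0P(3) by auto
  show "a0 \<noteq> t" "b0 \<noteq> t" using a0P(2) b0P(2) tP(2) by auto
qed

lemma ABdisj: "A \<inter> B = {}" "A \<inter> X = {}" "B \<inter> X = {}"
proof -
  have "{Pos x} \<noteq> {Neg x, Pos y}" by (metis insertI1 lit.distinct(1) singletonD)
  then show "A \<inter> B = {}" unfolding A_def B_def by blast
  show "A \<inter> X = {}" unfolding A_def X_def by force
  show "B \<inter> X = {}" unfolding B_def X_def by force
qed

lemma infQ_t: "inf Q t = Some (a0, b0, x)" by (simp add: Qsimps)
lemma infQ_a0: "inf Q a0 = None" using facts by (simp add: Qsimps)
lemma infQ_b0: "inf Q b0 = None" using facts by (simp add: Qsimps)
lemma infQ_Om: "n \<in> Om \<Longrightarrow> inf Q n = map_option (\<lambda>(p1, p2, z). (phi p1, phi p2, z)) (inf P n)"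
  using facts by (auto simp add: Qsimps)

lemma Om_notX: "n \<in> Om \<Longrightarrow> inf P n = Some (p1, p2, z) \<Longrightarrow> z \<noteq> x"
  unfolding Om_def X_def by auto

lemma phi_Om: "p \<in> Om \<Longrightarrow> phi p = p"
  unfolding phi_def psi_def Om_def by auto

lemma phi_props: assumes "p \<in> nodes P" "p \<notin> A"
  shows "phi p \<in> Om \<union> {t}" "lab Q (phi p) = lab P p - {Neg x}"
proof -
  have "(phi p \<in> Om \<union> {t}) \<and> lab Q (phi p) = lab P p - {Neg x}"
  proof (cases "p \<in> X")
    case True
    then obtain a b where s: "inf P p = Some (a, b, x)" unfolding X_def by auto
    have sp: "sp p = b" unfolding sp_def using s by simp
    note xl = Xlab[OF assms(1) s] and xp = Xprops[OF assms(1) s]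
    show ?thesis
    proof (cases "b \<in> B")
      case True
      then have "phi p = t" unfolding phi_def psi_def using \<open>p \<in> X\<close> sp by simp
      moreover have "lab P b = {Neg x, Pos y}" using True unfolding B_def by auto
      ultimately show ?thesis using xl xp by (auto simp: Qsimps)
    next
      case False
      then have "phi p = b" unfolding phi_def psi_def using \<open>p \<in> X\<close> sp by simp
      moreover have "b \<in> Om" using False xl xp unfolding Om_def by auto
      ultimately show ?thesis using xl xp facts by (auto simp: Qsimps)
    qed
  next
    case False
    show ?thesis
    proof (cases "p \<in> B")
      case True
      then have "phi p = t" unfolding phi_def psi_def using False by simp
      moreover have "lab P p = {Neg x, Pos y}" using True unfolding B_def by auto
      ultimately show ?thesis by (auto simp: Qsimps)
    next
      case F2: False
      then have "p \<in> Om" using False assms unfolding Om_def by auto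
      then show ?thesis using phi_Om facts by (auto simp: Qsimps)
    qed
  qed
  then show "phi p \<in> Om \<union> {t}" "lab Q (phi p) = lab P p - {Neg x}" by auto
qed

lemma Om_parents: assumes "n \<in> Om" "inf P n = Some (p1, p2, z)"
  shows "p1 \<in> nodes P" "p2 \<in> nodes P" "p1 \<notin> A" "p2 \<notin> A" "z \<noteq> x"
proof -
  have nN: "n \<in> nodes P" using assms unfolding Om_def by auto
  show z: "z \<noteq> x" using Om_notX assms by auto
  show "p1 \<in> nodes P" "p2 \<in> nodes P" using innerL[OF nN assms(2)] by auto
  show "p1 \<notin> A" "p2 \<notin> A" using nonX[OF nN assms(2) z] by auto
qed

lemma EQ: "(u, v) \<in> edges Q \<longleftrightarrow> (v = t \<and> (u = a0 \<or> u = b0)) \<or>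
   (v \<in> Om \<and> (\<exists>p1 p2 z. inf P v = Some (p1, p2, z) \<and> (u = phi p1 \<or> u = phi p2)))"
proof
  assume "(u, v) \<in> edges Q"
  then have v: "v \<in> nodes Q" and ex: "\<exists>b z. inf Q v = Some (u, b, z) \<or> inf Q v = Some (b, u, z)"
    unfolding edges_def by auto
  show "(v = t \<and> (u = a0 \<or> u = b0)) \<or>
   (v \<in> Om \<and> (\<exists>p1 p2 z. inf P v = Some (p1, p2, z) \<and> (u = phi p1 \<or> u = phi p2)))"
  proof (cases "v = t")
    case True then show ?thesis using ex infQ_t by auto
  next
    case False
    then have "v \<in> Om" using v ex infQ_a0 infQ_b0 by (auto simp: Qsimps)
    then show ?thesis using ex infQ_Om by fastforce
  qed
next
  assume "(v = t \<and> (u = a0 \<or> u = b0)) \<or>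
   (v \<in> Om \<and> (\<exists>p1 p2 z. inf P v = Some (p1, p2, z) \<and> (u = phi p1 \<or> u = phi p2)))"
  then show "(u, v) \<in> edges Q"
  proof
    assume "v = t \<and> (u = a0 \<or> u = b0)"
    then show ?thesis unfolding edges_def using infQ_t by (auto simp: Qsimps)
  next
    assume "v \<in> Om \<and> (\<exists>p1 p2 z. inf P v = Some (p1, p2, z) \<and> (u = phi p1 \<or> u = phi p2))"
    then obtain p1 p2 z where h: "v \<in> Om" "inf P v = Some (p1, p2, z)" "u = phi p1 \<or> u = phi p2"
      by auto
    have "inf Q v = Some (phi p1, phi p2, z)" using infQ_Om[OF h(1)] h(2) by simp
    then show ?thesis unfolding edges_def using h by (auto simp: Qsimps)
  qed
qed

lemma EQ_src: "(u, v) \<in> edges Q \<Longrightarrow> u \<in> Om \<union> {a0, b0, t}"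
proof -
  assume "(u, v) \<in> edges Q"
  then have "(v = t \<and> (u = a0 \<or> u = b0)) \<or>
   (v \<in> Om \<and> (\<exists>p1 p2 z. inf P v = Some (p1, p2, z) \<and> (u = phi p1 \<or> u = phi p2)))"
    using EQ by blast
  then show ?thesis
  proof
    assume "v \<in> Om \<and> (\<exists>p1 p2 z. inf P v = Some (p1, p2, z) \<and> (u = phi p1 \<or> u = phi p2))"
    then obtain p1 p2 z where h: "v \<in> Om" "inf P v = Some (p1, p2, z)" "u = phi p1 \<or> u = phi p2"
      by blast
    note op = Om_parents[OF h(1,2)]
    show ?thesis using h(3) phi_props(1)[OF op(1) op(3)] phi_props(1)[OF op(2) op(4)] by blast
  qed blast
qed

lemma EQ_tgt: "(u, v) \<in> edges Q \<Longrightarrow> v \<in> Om \<union> {t}"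
  using EQ by blast

lemma E1: assumes "(u, v) \<in> edges Q" "u \<in> Om"
  shows "v \<in> Om \<and> (u, v) \<in> (edges P)\<^sup>+"
proof -
  have d: "(v = t \<and> (u = a0 \<or> u = b0)) \<or>
   (v \<in> Om \<and> (\<exists>p1 p2 z. inf P v = Some (p1, p2, z) \<and> (u = phi p1 \<or> u = phi p2)))"
    using assms(1) EQ by blast
  have "\<not> (u = a0 \<or> u = b0)" using assms(2) facts by blast
  then obtain p1 p2 z where h: "v \<in> Om" "inf P v = Some (p1, p2, z)" "u = phi p1 \<or> u = phi p2"
    using d by blast
  have vN: "v \<in> nodes P" using h unfolding Om_def by auto
  obtain p where p: "p = p1 \<or> p = p2" "u = phi p" using h by auto
  have pE: "(p, v) \<in> edges P" using p edgeI[OF vN h(2)] by auto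
  have pN: "p \<in> nodes P" "p \<notin> A" using p Om_parents[OF h(1,2)] by auto
  have "(u, v) \<in> (edges P)\<^sup>+"
  proof (cases "p \<in> X")
    case True
    then obtain a b where s: "inf P p = Some (a, b, x)" unfolding X_def by auto
    have "sp p = b" unfolding sp_def using s by simp
    then have "u = psi b" using p True unfolding phi_def by simp
    then have "u = b" using assms(2) facts unfolding psi_def by (auto split: if_splits)
    then have "(u, p) \<in> edges P" using edgeI[OF pN(1) s] by simp
    then show ?thesis using pE by auto
  next
    case False
    then have "u = psi p" using p unfolding phi_def by simp
    then have "u = p" using assms(2) facts unfolding psi_def by (auto split: if_splits)
    then show ?thesis using pE by auto
  qed
  then show ?thesis using h by auto
qed

lemma E2: assumes "(u, v) \<in> (edges Q)\<^sup>+" "u \<in> Om"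
  shows "v \<in> Om \<and> (u, v) \<in> (edges P)\<^sup>+"
  using assms(1)
proof (induction rule: trancl_induct)
  case (base y) then show ?case using E1 assms(2) by auto
next
  case (step y z) then show ?case using E1[of y z] by (meson trancl_trans)
qed

lemma no_in_a0b0: "(u, v) \<in> edges Q \<Longrightarrow> v \<noteq> a0 \<and> v \<noteq> b0"
proof -
  assume "(u, v) \<in> edges Q"
  then have "v \<in> Om \<union> {t}" by (rule EQ_tgt)
  then show ?thesis using facts(7,10,12,13) by blast
qed

lemma from_t: "(t, v) \<in> edges Q \<Longrightarrow> v \<in> Om"
proof -
  assume h: "(t, v) \<in> edges Q"
  have d: "(v = t \<and> (t = a0 \<or> t = b0)) \<or>
   (v \<in> Om \<and> (\<exists>p1 p2 z. inf P v = Some (p1, p2, z) \<and> (t = phi p1 \<or> t = phi p2)))"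
    using h EQ by blast
  have "v \<noteq> t" using d facts(4,12,13) by metis
  then show ?thesis using EQ_tgt[OF h] by blast
qed

lemma tr_tgt: "(u, v) \<in> (edges Q)\<^sup>+ \<Longrightarrow> v \<in> Om \<union> {t}"
  by (induction rule: trancl_induct) (auto dest: EQ_tgt)

lemma acycQ: "acyclic (edges Q)"
  unfolding acyclic_def
proof
  fix u
  show "(u, u) \<notin> (edges Q)\<^sup>+"
  proof
    assume c: "(u, u) \<in> (edges Q)\<^sup>+"
    show False
    proof (cases "u \<in> Om")
      case True
      then have "(u, u) \<in> (edges P)\<^sup>+" using E2 c by auto
      then show False using acycP unfolding acyclic_def by auto
    next
      case False
      then have ut: "u = t" using tr_tgt c by auto
      obtain w where w: "(u, w) \<in> edges Q" "(w, u) \<in> (edges Q)\<^sup>*" using c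
        by (meson converse_tranclE r_into_rtrancl tranclD)
      have "w \<in> Om" using from_t w(1) ut by auto
      then have "(w, u) \<in> (edges Q)\<^sup>+ \<Longrightarrow> u \<in> Om" using E2 by auto
      moreover have "w \<noteq> u" using \<open>w \<in> Om\<close> False by auto
      ultimately show False using w(2) False by (meson rtranclD)
    qed
  qed
qed

lemma pivQ_Om: "n \<in> Om \<Longrightarrow> pivot Q n = pivot P n"
  unfolding pivot_def using infQ_Om by (auto split: option.splits)

lemma pivP_Om: "n \<in> Om \<Longrightarrow> pivot P n \<noteq> Some x"
  unfolding pivot_def Om_def X_def by (auto split: option.splits)

lemma regQ: "regular Q"
  unfolding regular_def
proof (intro allI impI)
  fix m n z
  assume mn: "(m, n) \<in> (edges Q)\<^sup>+" and pm: "pivot Q m = Some z"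
  obtain w where w: "(m, w) \<in> edges Q" "(w, n) \<in> (edges Q)\<^sup>*" using mn by (meson tranclD)
  have "m \<in> Om \<union> {a0, b0, t}" using EQ_src w by blast
  moreover have "pivot Q a0 = None" "pivot Q b0 = None"
    unfolding pivot_def using infQ_a0 infQ_b0 by auto
  ultimately have mO: "m \<in> Om \<or> m = t" using pm by auto
  then show "pivot Q n \<noteq> Some z"
  proof
    assume mO: "m \<in> Om"
    then have "n \<in> Om" "(m, n) \<in> (edges P)\<^sup>+" using E2 mn by auto
    then show ?thesis using pm mO pivQ_Om regP unfolding regular_def by metis
  next
    assume mt: "m = t"
    then have "z = x" using pm infQ_t unfolding pivot_def by simp
    have wO: "w \<in> Om" using from_t w(1) mt by blast
    have "n \<in> Om"
    proof (cases "w = n")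
      case True then show ?thesis using wO by simp
    next
      case False then have "(w, n) \<in> (edges Q)\<^sup>+" using w(2) by (meson rtranclD)
      then show ?thesis using E2 wO by blast
    qed
    then show ?thesis using pivQ_Om pivP_Om \<open>z = x\<close> by simp
  qed
qed

end


context L8b
begin

lemma reachQ_phi: assumes "(p, r) \<in> (edges P)\<^sup>*" "p \<in> nodes P" "p \<notin> A"
  shows "(phi p, phi r) \<in> (edges Q)\<^sup>*"
  using assms
proof (induction rule: converse_rtrancl_induct)
  case base then show ?case by simp
next
  case (step p c)
  obtain a b z where s: "inf P c = Some (a, b, z)" and pab: "p = a \<or> p = b" and cN: "c \<in> nodes P"
    using edgeD[OF step(1)] by blast
  have cA: "c \<notin> A" using s unfolding A_def by auto
  have IH: "(phi c, phi r) \<in> (edges Q)\<^sup>*" using step.IH cN cA by blast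
  have "(phi p, phi c) \<in> (edges Q)\<^sup>*"
  proof (cases "c \<in> X")
    case True
    then obtain a' b' where s': "inf P c = Some (a', b', x)" unfolding X_def by auto
    then have eq: "a' = a" "b' = b" "z = x" using s by auto
    have "a \<in> A" using Xlab(1)[OF cN s'] eq by simp
    then have pb: "p = b" using pab step.prems(2) by auto
    have "b \<notin> X" using Xprops(2)[OF cN s'] eq by simp
    then have "phi p = psi b" using pb unfolding phi_def by simp
    moreover have "phi c = psi b" using True s unfolding phi_def sp_def by simp
    ultimately show ?thesis by simp
  next
    case False
    then have cO: "c \<in> Om" using cA s cN unfolding Om_def B_def by auto
    then have "phi c = c" by (rule phi_Om)
    moreover have "(phi p, c) \<in> edges Q" using EQ cO s pab by blast
    ultimately show ?thesis by simp
  qed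
  then show ?case using IH by simp
qed

lemma rootA: "root P \<notin> A" using rootL unfolding A_def by auto

lemma phi_b0: "phi b0 = t" using facts b0B unfolding phi_def psi_def by simp

lemma resQ: "res_proof (fxy x y F) Q"
  unfolding res_proof_def
proof (intro conjI ballI)
  show "finite (nodes Q)" using finN unfolding Qsimps Om_def by auto
  show rQ: "root Q \<in> nodes Q" using phi_props(1)[OF rootN rootA] unfolding Qsimps by auto
  show "lab Q (root Q) = {}" using phi_props(2)[OF rootN rootA] rootL unfolding Qsimps(4) by simp
  show "acyclic (edges Q)" by (rule acycQ)
next
  fix n assume n: "n \<in> nodes Q"
  have rr: "(phi p, root Q) \<in> (edges Q)\<^sup>*" if "p \<in> nodes P" "p \<notin> A" for p
    using reachQ_phi[OF reachP[OF that(1)] that] unfolding Qsimps(4) .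
  have tr: "(t, root Q) \<in> (edges Q)\<^sup>*" using rr[OF facts(15) facts(9)] phi_b0 by simp
  have n': "n \<in> Om \<or> n = a0 \<or> n = b0 \<or> n = t" using n unfolding Qsimps by auto
  then show "(n, root Q) \<in> (edges Q)\<^sup>*"
  proof (elim disjE)
    assume "n \<in> Om"
    then show ?thesis using rr[of n] phi_Om[of n] unfolding Om_def by auto
  next
    assume "n = a0"
    then have "(n, t) \<in> edges Q" using EQ by blast
    then show ?thesis using tr by simp
  next
    assume "n = b0"
    then have "(n, t) \<in> edges Q" using EQ by blast
    then show ?thesis using tr by simp
  qed (use tr in simp)
  show "case inf Q n of None \<Rightarrow> lab Q n \<in> fxy x y F
       | Some (a, b, z) \<Rightarrow> a \<in> nodes Q \<and> b \<in> nodes Q \<and> resolvent (lab Q a) (lab Q b) z (lab Q n)"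
    using n'
  proof (elim disjE)
    assume nO: "n \<in> Om"
    have nt: "n \<noteq> t" "n \<noteq> b0" using nO facts by auto
    show ?thesis
    proof (cases "inf P n")
      case None
      then have iq: "inf Q n = None" using infQ_Om[OF nO] by simp
      have nN: "n \<in> nodes P" using nO unfolding Om_def by auto
      have l: "lab P n \<in> fxy x y F" using leafL[OF nN None] .
      have "lab P n \<noteq> {Pos x}" "lab P n \<noteq> {Neg x, Pos y}" using nO nN None
        unfolding Om_def A_def B_def by auto
      then have "Neg x \<notin> lab P n" using fxy_cases[OF l] by auto
      then have "lab Q n = lab P n" using nt unfolding Qsimps(2) by auto
      then show ?thesis using iq l by simp
    next
      case (Some tr)
      then obtain p1 p2 z where s: "inf P n = Some (p1, p2, z)" by (cases tr) auto
      then have iq: "inf Q n = Some (phi p1, phi p2, z)" using infQ_Om[OF nO] by simp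
      have nN: "n \<in> nodes P" using nO unfolding Om_def by auto
      note op = Om_parents[OF nO s]
      note i = innerL[OF nN s]
      note f1 = phi_props[OF op(1) op(3)] and f2 = phi_props[OF op(2) op(4)]
      have ln: "lab Q n = lab P n - {Neg x}" using nt unfolding Qsimps(2) by auto
      have "resolvent (lab Q (phi p1)) (lab Q (phi p2)) z (lab Q n)"
        unfolding resolvent_def f1(2) f2(2) ln i(5) using i(3,4) op(5) by auto
      moreover have "phi p1 \<in> nodes Q" "phi p2 \<in> nodes Q" using f1(1) f2(1) unfolding Qsimps by auto
      ultimately show ?thesis using iq by simp
    qed
  next
    assume "n = a0"
    then show ?thesis using infQ_a0 facts unfolding Qsimps(2) fxy_def by simp
  next
    assume "n = b0"
    then show ?thesis using infQ_b0 facts unfolding Qsimps(2) fxy_def by simp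
  next
    assume nt: "n = t"
    have "lab Q a0 = {Pos x}" using facts unfolding Qsimps(2) by simp
    moreover have "lab Q b0 = {Neg x, Pos y}" using facts unfolding Qsimps(2) by simp
    moreover have "lab Q t = {Pos y}" unfolding Qsimps(2) by simp
    moreover have "resolvent {Pos x} {Neg x, Pos y} x {Pos y}" unfolding resolvent_def by auto
    ultimately show ?thesis using nt infQ_t unfolding Qsimps(1) by simp
  qed
qed

lemma regproofQ: "reg_proof (fxy x y F) Q"
  unfolding reg_proof_def using resQ regQ by simp

lemma cardQ: "card (nodes Q) + card X + card A + card B = card (nodes P) + 3"
proof -
  have sub: "X \<subseteq> nodes P" "A \<subseteq> nodes P" "B \<subseteq> nodes P" unfolding X_def A_def B_def by auto
  have fins: "finite X" "finite A" "finite B" using sub finN by (meson finite_subset)+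
  have c1: "card (X \<union> A \<union> B) = card X + card A + card B"
  proof -
    have "(X \<union> A) \<inter> B = {}" using ABdisj by blast
    then have "card (X \<union> A \<union> B) = card (X \<union> A) + card B" using fins by (simp add: card_Un_disjoint)
    moreover have "card (X \<union> A) = card X + card A" using ABdisj fins by (simp add: card_Un_disjoint Int_commute)
    ultimately show ?thesis by simp
  qed
  have OmE: "Om = nodes P - (X \<union> A \<union> B)" unfolding Om_def by auto
  have c2: "card Om + card (X \<union> A \<union> B) = card (nodes P)"
    unfolding OmE using sub finN by (metis card_Diff_subset card_mono le_add_diff_inverse2 le_sup_iff finite_subset)
  have d: "Om \<inter> {a0, b0, t} = {}" using facts by auto
  have c3: "card {a0, b0, t} = 3" using facts by auto
  have "card (nodes Q) = card Om + 3"
  proof -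
    have "finite Om" using finN unfolding Om_def by simp
    then have "card (Om \<union> {a0, b0, t}) = card Om + card {a0, b0, t}"
      using d by (intro card_Un_disjoint) auto
    then show ?thesis using c3 unfolding Qsimps by simp
  qed
  then show ?thesis using c1 c2 by simp
qed

lemma pivQ_set: "{n \<in> nodes Q. pivot Q n = Some x} = {t}"
proof -
  have "pivot Q t = Some x" unfolding pivot_def using infQ_t by simp
  moreover have "pivot Q a0 = None" "pivot Q b0 = None"
    unfolding pivot_def using infQ_a0 infQ_b0 by auto
  moreover have "n \<in> Om \<Longrightarrow> pivot Q n \<noteq> Some x" for n using pivQ_Om pivP_Om by simp
  ultimately show ?thesis unfolding Qsimps by auto
qed

end

theorem lemma8:
  fixes F :: "'v clause set" and x y :: 'v and P :: "'v rproof"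
  assumes "cnf F" and "\<not> satisfiable F"
    and "x \<noteq> y" and "\<not> occurs x F" and "\<not> occurs y F"
    and "min_reg_proof (fxy x y F) P"
  shows "card {n \<in> nodes P. pivot P n = Some x} = 1 \<and>
         (\<exists>Q. reg_proof (fxy x y F) Q \<and> psize Q = psize P \<and>
           card {n \<in> nodes Q. pivot Q n = Some x} = 1 \<and>
           (\<forall>n\<in>nodes Q. pivot Q n = Some x \<longrightarrow>
              (\<exists>a b. inf Q n = Some (a, b, x) \<and> inf Q a = None \<and> inf Q b = None \<and>
                     lab Q a = {Pos x} \<and> lab Q b = {Neg x, Pos y})))"
proof -
  have rp: "res_proof (fxy x y F) P" and rg: "regular P"
    and mn: "\<And>Q. reg_proof (fxy x y F) Q \<Longrightarrow> psize P \<le> psize Q"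
    using assms(6) unfolding min_reg_proof_def reg_proof_def by auto
  interpret L: L8 F x y P using assms(3,4) rp by unfold_locales
  obtain t where tX: "t \<in> L.X" using L.Xne by auto
  then obtain a b where s: "inf P t = Some (a, b, x)" and tN: "t \<in> nodes P"
    unfolding L.X_def by auto
  have aA: "a \<in> L.A" using L.Xlab(1)[OF tN s] .
  have "L.B \<noteq> {}" using L.LNeg[OF L.Xlab(2,3)[OF tN s]] .
  then obtain b0 where bB: "b0 \<in> L.B" by auto
  interpret M: L8b F x y P t a b0 using rg tX aA bB by unfold_locales
  have sub: "L.X \<subseteq> nodes P" "L.A \<subseteq> nodes P" "L.B \<subseteq> nodes P"
    unfolding L.X_def L.A_def L.B_def by auto
  have fins: "finite L.X" "finite L.A" "finite L.B" using sub L.finN by (meson finite_subset)+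
  have c: "card L.X \<ge> 1" "card L.A \<ge> 1" "card L.B \<ge> 1"
    using fins tX aA bB by (auto simp: Suc_le_eq card_gt_0_iff)
  have "psize P \<le> psize M.Q" using mn[OF M.regproofQ] .
  then have le: "card (nodes P) \<le> card (nodes M.Q)" unfolding psize_def .
  have cX: "card L.X = 1" using le M.cardQ c by linarith
  have eqs: "psize M.Q = psize P" using le M.cardQ c unfolding psize_def by linarith
  have pset: "{n \<in> nodes P. pivot P n = Some x} = L.X"
    unfolding L.X_def pivot_def by (auto split: option.splits)
  have last: "\<forall>n\<in>nodes M.Q. pivot M.Q n = Some x \<longrightarrow>
              (\<exists>a' b'. inf M.Q n = Some (a', b', x) \<and> inf M.Q a' = None \<and> inf M.Q b' = None \<and>
                     lab M.Q a' = {Pos x} \<and> lab M.Q b' = {Neg x, Pos y})"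
  proof (intro ballI impI)
    fix n assume "n \<in> nodes M.Q" "pivot M.Q n = Some x"
    then have "n = t" using M.pivQ_set by blast
    moreover have "lab M.Q a = {Pos x}" "lab M.Q b0 = {Neg x, Pos y}"
      using M.facts unfolding M.Qsimps(2) by simp_all
    ultimately show "\<exists>a' b'. inf M.Q n = Some (a', b', x) \<and> inf M.Q a' = None \<and> inf M.Q b' = None \<and>
                     lab M.Q a' = {Pos x} \<and> lab M.Q b' = {Neg x, Pos y}"
      using M.infQ_t M.infQ_a0 M.infQ_b0 by blast
  qed
  show ?thesis using cX pset M.regproofQ eqs M.pivQ_set last by auto
qed

end
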